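(* Let $\alpha_{\mathrm{model}}$ be the hybrid program defined in the context. Then the following two differential dynamic logic formulas are valid, i.e. true in every state (every assignment of real values to all variables and constants): $$\mathrm{Ctx}\ \wedge\ x_e + L \le x_o\ \wedge\ D_e(B_{\min}) + L < D_o\ \wedge\ t_c = t - T\ \ \rightarrow\ \ [\alpha_{\mathrm{model}}]\,\big(x_e + L \le x_o\big),$$ $$\mathrm{Ctx}\ \wedge\ x_o + L \le x_e\ \wedge\ \hat D_o + L < \hat D_e(A_{\min})\ \wedge\ t_c = t - T\ \ \rightarrow\ \ [\alpha_{\mathrm{model}}]\,\big(x_o + L \le x_e\big).$$ That is, from every state satisfying the respective premise, every final state of every run of $\alpha_{\mathrm{model}}$ satisfies the respective distance condition.
   Context: Hybrid programs and their semantics (differential dynamic logic). A state assigns a real number to every variable. Programs denote transition relations on states: $?\varphi$ stays in the current state if $\varphi$ holds there and has no transition otherwise; $x := e$ sets $x$ to the value of term $e$; $x := *$ sets $x$ to an arbitrary real; $\{x_1'=e_1,\dots,x_n'=e_n \,\&\, \psi\}$ follows the solution of the ODE system for any duration $r\ge 0$ (including $0$) such that $\psi$ holds throughout $[0,r]$, other variables unchanged; $\alpha\cup\beta$ is nondeterministic choice; $\alpha;\beta$ is sequential composition; $\alpha^*$ repeats $\alpha$ any finite number $\ge 0$ of times. $\mathtt{if}(\varphi)\,\alpha$ abbreviates $(?\varphi;\alpha)\cup ?\neg\varphi$, and $\mathtt{if}(\varphi)\,\alpha\ \mathtt{else}\ \beta$ abbreviates $(?\varphi;\alpha)\cup(?\neg\varphi;\beta)$.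 $[\alpha]\phi$ holds in state $\omega$ iff $\phi$ holds in every state reachable from $\omega$ by $\alpha$. Variables: ego car position $x_e$, velocity $v_e$, acceleration $a_e$; other car position $x_o$, velocity $v_o$, acceleration $a_o$; time $t$; clock $t_c$. Constants (not changed by programs): $T, L, V, A_{\min}, A_{\max}, B_{\min}, B_{\max}$. $\mathrm{Ctx} \equiv T>0 \wedge L>0 \wedge V>0 \wedge B_{\max}\le B_{\min}<0<A_{\min}\le A_{\max} \wedge B_{\max}\le a_e\le A_{\max}\wedge B_{\max}\le a_o\le A_{\max} \wedge 0\le v_e\le V \wedge 0\le v_o\le V$. Abbreviations: $D_e(a) = x_e - \frac{v_e^2}{2a}$, $D_o = x_o - \frac{v_o^2}{2B_{\max}}$; $\hat v_i = v_i - V$, $\hat x_i = x_i - V t$ for $i\in\{e,o\}$, $\hat D_e(a) = \hat x_e - \frac{\hat v_e^2}{2a}$, $\hat D_o = \hat x_o - \frac{\hat v_o^2}{2A_{\max}}$. $\mathrm{safeBack} \equiv x_e + L \le x_o \wedge \big( (a_e \le B_{\min} \wedge D_e(B_{\min}) + L < D_o) \vee (B_{\min}\le a_e \wedge v_e + a_e T < 0 \wedge D_e(a_e)+L<D_o) \vee (B_{\min}\le a_e \wedge v_e + a_e T\ge 0 \wedge D_e(B_{\min}) + (\tfrac{-a_e}{B_{\min}}+1)(\tfrac{a_e}{2}T^2 + T v_e) + L < D_o)\big)$. $\mathrm{safeFront} \equiv x_o + L \le x_e \wedge \big( (A_{\min}\le a_e \wedge \hat D_o + L < \hat D_e(A_{\min}))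 \vee (a_e \le A_{\min}\wedge \hat v_e + a_e T > 0 \wedge \hat D_o + L < \hat D_e(a_e)) \vee (a_e\le A_{\min} \wedge \hat v_e + a_e T \le 0 \wedge \hat D_o + L < \hat D_e(A_{\min}) + (\tfrac{-a_e}{A_{\min}}+1)(\tfrac{a_e}{2}T^2 + \hat v_e T))\big)$. Programs: $\mathrm{ctrl}_o \equiv a_o := *;\ ?(B_{\max}\le a_o\le A_{\max})$. $\mathrm{ctrl}_T \equiv a_e := *;\ ?(B_{\max}\le a_e\le A_{\max});\ t_c := t;\ \mathtt{if}(\neg(\mathrm{safeBack}\vee\mathrm{safeFront}))\ \{\mathtt{if}(x_e\le x_o)\ \{a_e:=*;\ ?(B_{\max}\le a_e\le B_{\min})\}\ \mathtt{else}\ \{a_e:=*;\ ?(A_{\min}\le a_e\le A_{\max})\}\}$. $\mathrm{accCor} \equiv \mathtt{if}((v_o=0\wedge a_o<0)\vee(v_o=V\wedge a_o>0))\ a_o:=0;\ \mathtt{if}((v_e=0\wedge a_e<0)\vee(v_e=V\wedge a_e>0))\ a_e:=0$. $\mathrm{plant} \equiv \{x_e'=v_e, v_e'=a_e, x_o'=v_o, v_o'=a_o, t'=1 \ \&\ t\le t_c+T \wedge 0\le v_e\le V\wedge 0\le v_o\le V\}$. $\alpha_{\mathrm{model}} \equiv \big(\mathrm{ctrl}_o;\ (\mathrm{ctrl}_T \cup ?(t<t_c+T));\ \mathrm{accCor};\ \mathrm{plant}\big)^*$. *)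

theory Defs
  imports "HOL-Analysis.Analysis"
begin

text \<open>States: values of the program variables. Constants are kept in a separate
  record since no program changes them.\<close>

record st =
  xe :: real
  ve :: real
  ae :: real
  xo :: real
  vo :: real
  ao :: real
  t  :: real
  tc :: real

record prm =
  cT :: real
  cL :: real
  cV :: real
  cAmin :: real
  cAmax :: real
  cBmin :: real
  cBmax :: real

type_synonym prog = "st \<Rightarrow> st \<Rightarrow> bool"

definition Test :: "(st \<Rightarrow> bool) \<Rightarrow> prog" where
  "Test P = (\<lambda>s s'. s' = s \<and> P s)"

definition Seq :: "prog \<Rightarrow> prog \<Rightarrow> prog" where
  "Seq a b = a OO b"

definition Choice :: "prog \<Rightarrow> prog \<Rightarrow> prog" where
  "Choice a b = (\<lambda>s s'. a s s' \<or> b s s')"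

definition Star :: "prog \<Rightarrow> prog" where
  "Star a = a\<^sup>*\<^sup>*"

definition IfP :: "(st \<Rightarrow> bool) \<Rightarrow> prog \<Rightarrow> prog" where
  "IfP P a = Choice (Seq (Test P) a) (Test (\<lambda>s. \<not> P s))"

definition IfElse :: "(st \<Rightarrow> bool) \<Rightarrow> prog \<Rightarrow> prog \<Rightarrow> prog" where
  "IfElse P a b = Choice (Seq (Test P) a) (Seq (Test (\<lambda>s. \<not> P s)) b)"

text \<open>Assignment x := e and nondeterministic assignment x := *, for a variable
  given by its record update function.\<close>

definition Asg :: "((real \<Rightarrow> real) \<Rightarrow> st \<Rightarrow> st) \<Rightarrow> (st \<Rightarrow> real) \<Rightarrow> prog" where
  "Asg upd e = (\<lambda>s s'. s' = upd (\<lambda>_. e s) s)"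

definition Rnd :: "((real \<Rightarrow> real) \<Rightarrow> st \<Rightarrow> st) \<Rightarrow> prog" where
  "Rnd upd = (\<lambda>s s'. \<exists>r. s' = upd (\<lambda>_. r) s)"

definition Box :: "prog \<Rightarrow> (st \<Rightarrow> bool) \<Rightarrow> st \<Rightarrow> bool" where
  "Box a \<phi> s = (\<forall>s'. a s s' \<longrightarrow> \<phi> s')"

definition Ctx :: "prm \<Rightarrow> st \<Rightarrow> bool" where
  "Ctx p s = (cT p > 0 \<and> cL p > 0 \<and> cV p > 0 \<and>
     cBmax p \<le> cBmin p \<and> cBmin p < 0 \<and> 0 < cAmin p \<and> cAmin p \<le> cAmax p \<and>
     cBmax p \<le> ae s \<and> ae s \<le> cAmax p \<and> cBmax p \<le> ao s \<and> ao s \<le> cAmax p \<and>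
     0 \<le> ve s \<and> ve s \<le> cV p \<and> 0 \<le> vo s \<and> vo s \<le> cV p)"

definition De :: "real \<Rightarrow> st \<Rightarrow> real" where
  "De a s = xe s - (ve s)\<^sup>2 / (2 * a)"

definition Do :: "prm \<Rightarrow> st \<Rightarrow> real" where
  "Do p s = xo s - (vo s)\<^sup>2 / (2 * cBmax p)"

definition hve :: "prm \<Rightarrow> st \<Rightarrow> real" where "hve p s = ve s - cV p"
definition hvo :: "prm \<Rightarrow> st \<Rightarrow> real" where "hvo p s = vo s - cV p"
definition hxe :: "prm \<Rightarrow> st \<Rightarrow> real" where "hxe p s = xe s - cV p * t s"
definition hxo :: "prm \<Rightarrow> st \<Rightarrow> real" where "hxo p s = xo s - cV p * t s"

definition hDe :: "prm \<Rightarrow> real \<Rightarrow> st \<Rightarrow> real" where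
  "hDe p a s = hxe p s - (hve p s)\<^sup>2 / (2 * a)"

definition hDo :: "prm \<Rightarrow> st \<Rightarrow> real" where
  "hDo p s = hxo p s - (hvo p s)\<^sup>2 / (2 * cAmax p)"

definition safeBack :: "prm \<Rightarrow> st \<Rightarrow> bool" where
  "safeBack p s = (xe s + cL p \<le> xo s \<and>
     ((ae s \<le> cBmin p \<and> De (cBmin p) s + cL p < Do p s) \<or>
      (cBmin p \<le> ae s \<and> ve s + ae s * cT p < 0 \<and> De (ae s) s + cL p < Do p s) \<or>
      (cBmin p \<le> ae s \<and> ve s + ae s * cT p \<ge> 0 \<and>
        De (cBmin p) s + (- ae s / cBmin p + 1) * (ae s / 2 * (cT p)\<^sup>2 + cT p * ve s) + cL p
          < Do p s)))"

definition safeFront :: "prm \<Rightarrow> st \<Rightarrow> bool" where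
  "safeFront p s = (xo s + cL p \<le> xe s \<and>
     ((cAmin p \<le> ae s \<and> hDo p s + cL p < hDe p (cAmin p) s) \<or>
      (ae s \<le> cAmin p \<and> hve p s + ae s * cT p > 0 \<and> hDo p s + cL p < hDe p (ae s) s) \<or>
      (ae s \<le> cAmin p \<and> hve p s + ae s * cT p \<le> 0 \<and>
        hDo p s + cL p < hDe p (cAmin p) s
          + (- ae s / cAmin p + 1) * (ae s / 2 * (cT p)\<^sup>2 + hve p s * cT p))))"

definition ctrl_o :: "prm \<Rightarrow> prog" where
  "ctrl_o p = Seq (Rnd ao_update) (Test (\<lambda>s. cBmax p \<le> ao s \<and> ao s \<le> cAmax p))"

definition ctrl_T :: "prm \<Rightarrow> prog" where
  "ctrl_T p =
     Seq (Rnd ae_update)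
    (Seq (Test (\<lambda>s. cBmax p \<le> ae s \<and> ae s \<le> cAmax p))
    (Seq (Asg tc_update t)
         (IfP (\<lambda>s. \<not> (safeBack p s \<or> safeFront p s))
            (IfElse (\<lambda>s. xe s \<le> xo s)
               (Seq (Rnd ae_update) (Test (\<lambda>s. cBmax p \<le> ae s \<and> ae s \<le> cBmin p)))
               (Seq (Rnd ae_update) (Test (\<lambda>s. cAmin p \<le> ae s \<and> ae s \<le> cAmax p)))))))"

definition accCor :: "prm \<Rightarrow> prog" where
  "accCor p =
     Seq (IfP (\<lambda>s. (vo s = 0 \<and> ao s < 0) \<or> (vo s = cV p \<and> ao s > 0)) (Asg ao_update (\<lambda>_. 0)))
         (IfP (\<lambda>s. (ve s = 0 \<and> ae s < 0) \<or> (ve s = cV p \<and> ae s > 0)) (Asg ae_update (\<lambda>_. 0)))"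

text \<open>Continuous evolution along
  {xe'=ve, ve'=ae, xo'=vo, vo'=ao, t'=1 & t <= tc+T /\ 0<=ve<=V /\ 0<=vo<=V}:
  some duration r >= 0 and a solution on [0,r] starting in s, with the evolution
  domain holding throughout [0,r]; ae, ao, tc are unchanged.\<close>

definition plant :: "prm \<Rightarrow> prog" where
  "plant p s s' = (\<exists>r::real. r \<ge> 0 \<and>
     (\<exists>X VE XO VO TM :: real \<Rightarrow> real.
        X 0 = xe s \<and> VE 0 = ve s \<and> XO 0 = xo s \<and> VO 0 = vo s \<and> TM 0 = t s \<and>
        (\<forall>\<tau>\<in>{0..r}.
           (X has_real_derivative VE \<tau>) (at \<tau> within {0..r}) \<and>
           (VE has_real_derivative ae s) (at \<tau> within {0..r}) \<and>
           (XO has_real_derivative VO \<tau>) (at \<tau> within {0..r}) \<and>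
           (VO has_real_derivative ao s) (at \<tau> within {0..r}) \<and>
           (TM has_real_derivative 1) (at \<tau> within {0..r}) \<and>
           TM \<tau> \<le> tc s + cT p \<and> 0 \<le> VE \<tau> \<and> VE \<tau> \<le> cV p \<and> 0 \<le> VO \<tau> \<and> VO \<tau> \<le> cV p) \<and>
        s' = s\<lparr>xe := X r, ve := VE r, xo := XO r, vo := VO r, t := TM r\<rparr>))"

definition model :: "prm \<Rightarrow> prog" where
  "model p = Star
     (Seq (ctrl_o p)
     (Seq (Choice (ctrl_T p) (Test (\<lambda>s. t s < tc s + cT p)))
     (Seq (accCor p) (plant p))))"

end

theory Submission
  imports Defs
begin


definition Qb :: "real \<Rightarrow> real \<Rightarrow> real \<Rightarrow> real \<Rightarrow> real \<Rightarrow> real \<Rightarrow> real \<Rightarrow> real \<Rightarrow> real \<Rightarrow> bool" where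
 "Qb Bmin Bmax L r ex ev ea ox ov =
   ((ea \<le> Bmin \<and> ex - ev\<^sup>2/(2 * Bmin) + L < ox - ov\<^sup>2/(2 * Bmax)) \<or>
    (Bmin \<le> ea \<and> ev + ea * r < 0 \<and> ex - ev\<^sup>2/(2 * ea) + L < ox - ov\<^sup>2/(2 * Bmax)) \<or>
    (Bmin \<le> ea \<and> ev + ea * r \<ge> 0 \<and>
      ex - ev\<^sup>2/(2 * Bmin) + (- ea/Bmin + 1) * (ea/2 * r\<^sup>2 + r *  ev) + L < ox - ov\<^sup>2/(2 * Bmax)))"

lemma frac_neg_mono:
  fixes a b c :: real
  assumes "b \<le> a" "a < 0"
  shows "- c\<^sup>2/(2 * b) \<le> - c\<^sup>2/(2 * a)"
proof -
  have "c\<^sup>2/(-2 * a) \<ge> c\<^sup>2/(-2 * b)"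
    using assms by (intro divide_left_mono) (auto simp: mult_neg_neg)
  then show ?thesis by (simp add: divide_simps)
qed

lemma Qb_stop:
  assumes "Bmax \<le> Bmin" "Bmin < 0" "0 \<le> r" "0 \<le> ev" "Qb Bmin Bmax L r ex ev ea ox ov"
  shows "ex - ev\<^sup>2/(2 * Bmin) + L < ox - ov\<^sup>2/(2 * Bmax)"
  using assms(5) unfolding Qb_def
proof (elim disjE conjE)
  assume a: "Bmin \<le> ea" "ev + ea * r < 0" "ex - ev\<^sup>2/(2 * ea) + L < ox - ov\<^sup>2/(2 * Bmax)"
  have "ea < 0" using a assms(3,4)
    by (smt (verit) mult_nonneg_nonneg)
  then show ?thesis using frac_neg_mono[OF a(1) \<open>ea<0\<close>, of ev] a by linarith
next
  assume a: "Bmin \<le> ea" "ev + ea * r \<ge> 0"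
    "ex - ev\<^sup>2/(2 * Bmin) + (- ea/Bmin + 1) * (ea/2 * r\<^sup>2 + r *  ev) + L < ox - ov\<^sup>2/(2 * Bmax)"
  have "ea/Bmin \<le> 1" using a(1) assms(2) by (simp add: divide_simps)
  moreover have "ea/2 * r\<^sup>2 + r *  ev = r  *  ((ev + (ev + ea * r))/2)" by (simp add: algebra_simps power2_eq_square)
  moreover have "r  *  ((ev + (ev + ea * r))/2) \<ge> 0" using a(2) assms(3,4) by simp
  ultimately have "(- ea/Bmin + 1) * (ea/2 * r\<^sup>2 + r *  ev) \<ge> 0" by simp
  then show ?thesis using a(3) by linarith
qed

lemma closing:
  fixes Bmax Bmin ov ev ex ox L :: real
  assumes "Bmax \<le> Bmin" "Bmin < 0" "0 \<le> ov" "ov \<le> ev"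
    "ex - ev\<^sup>2/(2 * Bmin) + L < ox - ov\<^sup>2/(2 * Bmax)"
  shows "ex + L < ox"
proof -
  have "ov\<^sup>2 \<le> ev\<^sup>2" using assms(3,4) by (intro power_mono) auto
  have "ov\<^sup>2/(-2 * Bmax) \<le> ev\<^sup>2/(-2 * Bmax)" using \<open>ov\<^sup>2 \<le> ev\<^sup>2\<close> assms
    by (intro divide_right_mono) auto
  also have "\<dots> \<le> ev\<^sup>2/(-2 * Bmin)" using assms by (intro divide_left_mono) (auto simp: mult_neg_neg)
  finally have "- ov\<^sup>2/(2 * Bmax) \<le> - ev\<^sup>2/(2 * Bmin)" by (simp add: divide_simps)
  then show ?thesis using assms(5) by linarith
qed

lemma De_shift:
  fixes a x v \<tau> :: real
  assumes "a \<noteq> 0"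
  shows "(x + v * \<tau> + b * \<tau>\<^sup>2/2) - (v + b * \<tau>)\<^sup>2/(2 * a) = x - v\<^sup>2/(2 * a) + (v * \<tau> + b * \<tau>\<^sup>2/2) * (1 - b/a)"
  using assms by (simp add: field_simps power2_eq_square)

lemma travel_nonneg:
  fixes v b \<tau> :: real
  assumes "0 \<le> \<tau>" "0 \<le> v" "0 \<le> v + b * \<tau>"
  shows "v * \<tau> + b * \<tau>\<^sup>2/2 \<ge> 0"
proof -
  have "v * \<tau> + b * \<tau>\<^sup>2/2 = \<tau>  *  ((v + (v + b * \<tau>))/2)" by (simp add: algebra_simps power2_eq_square)
  also have "\<dots> \<ge> 0" using assms by simp
  finally show ?thesis .
qed

lemma Do_mono:
  fixes Bmax ox ov oa \<tau> :: real
  assumes "Bmax < 0" "Bmax \<le> oa" "0 \<le> \<tau>" "0 \<le> ov" "0 \<le> ov + oa * \<tau>"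
  shows "ox - ov\<^sup>2/(2 * Bmax) \<le> (ox + ov * \<tau> + oa * \<tau>\<^sup>2/2) - (ov + oa * \<tau>)\<^sup>2/(2 * Bmax)"
proof -
  have "oa/Bmax \<le> 1" using assms by (simp add: divide_simps)
  then have "(ov * \<tau> + oa * \<tau>\<^sup>2/2) * (1 - oa/Bmax) \<ge> 0"
    using travel_nonneg[OF assms(3-5)] by simp
  then show ?thesis using De_shift[of Bmax ox ov \<tau> oa] assms(1) by simp
qed

lemma Qb_flow:
  fixes Bmax Bmin L r ex ev ea ox ov oa \<tau> :: real
  assumes "Bmax \<le> Bmin" "Bmin < 0" "Bmax \<le> oa" "0 \<le> \<tau>" "0 \<le> ev" "0 \<le> ev + ea * \<tau>"
    "0 \<le> ov" "0 \<le> ov + oa * \<tau>" "Qb Bmin Bmax L r ex ev ea ox ov"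
  shows "Qb Bmin Bmax L (r - \<tau>) (ex + ev * \<tau> + ea * \<tau>\<^sup>2/2) (ev + ea * \<tau>) ea (ox + ov * \<tau> + oa * \<tau>\<^sup>2/2) (ov + oa * \<tau>)"
proof -
  let ?Do = "ox - ov\<^sup>2/(2 * Bmax)"
  let ?Do' = "(ox + ov * \<tau> + oa * \<tau>\<^sup>2/2) - (ov + oa * \<tau>)\<^sup>2/(2 * Bmax)"
  have Do: "?Do \<le> ?Do'" using Do_mono[of Bmax oa \<tau> ov ox] assms by simp
  have tr: "ev * \<tau> + ea * \<tau>\<^sup>2/2 \<ge> 0" using travel_nonneg assms by blast
  have Bm: "(ex + ev * \<tau> + ea * \<tau>\<^sup>2/2) - (ev + ea * \<tau>)\<^sup>2/(2 * Bmin) = ex - ev\<^sup>2/(2 * Bmin) + (ev * \<tau> + ea * \<tau>\<^sup>2/2) * (1 - ea/Bmin)"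
    using De_shift assms(2) by simp
  have vr: "(ev + ea * \<tau>) + ea * (r - \<tau>) = ev + ea * r" by (simp add: algebra_simps)
  show ?thesis
    using assms(9)[unfolded Qb_def]
  proof (elim disjE conjE)
    assume a: "ea \<le> Bmin" "ex - ev\<^sup>2/(2 * Bmin) + L < ?Do"
    have "ea/Bmin \<ge> 1" using a assms(2) by (simp add: divide_simps)
    then have "(ev * \<tau> + ea * \<tau>\<^sup>2/2) * (1 - ea/Bmin) \<le> 0" using tr by (simp add: mult_nonneg_nonpos)
    note h = this
    show ?thesis unfolding Qb_def apply (intro disjI1 conjI) using h a Do Bm by linarith+
  next
    assume a: "Bmin \<le> ea" "ev + ea * r < 0" "ex - ev\<^sup>2/(2 * ea) + L < ?Do"
    have "ea \<noteq> 0" using a assms by auto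
    have "(ex + ev * \<tau> + ea * \<tau>\<^sup>2/2) - (ev + ea * \<tau>)\<^sup>2/(2 * ea) = ex - ev\<^sup>2/(2 * ea)"
      using De_shift[OF \<open>ea \<noteq> 0\<close>, of ex ev \<tau> ea] \<open>ea \<noteq> 0\<close> by simp
    note h = this
    show ?thesis unfolding Qb_def apply (rule disjI2, rule disjI1, intro conjI) using h a Do vr by linarith+
  next
    assume a: "Bmin \<le> ea" "ev + ea * r \<ge> 0"
      "ex - ev\<^sup>2/(2 * Bmin) + (- ea/Bmin + 1) * (ea/2 * r\<^sup>2 + r  *  ev) + L < ?Do"
    have "(ev * \<tau> + ea * \<tau>\<^sup>2/2) * (1 - ea/Bmin) + (- ea/Bmin + 1) * (ea/2 * (r-\<tau>)\<^sup>2 + (r-\<tau>)  *  (ev + ea * \<tau>))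
       = (- ea/Bmin + 1) * (ea/2 * r\<^sup>2 + r  *  ev)"
      by (simp add: algebra_simps power2_eq_square)
    note h = this
    show ?thesis unfolding Qb_def apply (intro disjI2 conjI) using h a Do Bm vr by linarith+
  qed
qed

lemma Qb_acc:
  fixes Bmax Bmin L r ex ev ea ox ov :: real
  assumes "Bmax \<le> Bmin" "Bmin < 0" "0 \<le> r" "0 \<le> ev" "Qb Bmin Bmax L r ex ev ea ox ov"
    "(ev = 0 \<and> ea < 0) \<or> ea > 0"
  shows "Qb Bmin Bmax L r ex ev 0 ox ov"
  using assms(6)
proof
  assume "ev = 0 \<and> ea < 0"
  then show ?thesis using Qb_stop[OF assms(1-5)] assms(2) unfolding Qb_def by simp
next
  assume ea: "ea > 0"
  then have a: "ex - ev\<^sup>2/(2*Bmin) + (- ea/Bmin + 1)*(ea/2*r\<^sup>2 + r * ev) + L < ox - ov\<^sup>2/(2*Bmax)"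
    using assms(5) assms(2-4) unfolding Qb_def by (smt (verit) mult_nonneg_nonneg)
  have "(- ea/Bmin + 1)*(ea/2*r\<^sup>2 + r * ev) - r * ev = ea/2*r\<^sup>2 + (- ea/Bmin) * (ea/2*r\<^sup>2 + r * ev)"
    using assms(2) by (simp add: field_simps)
  moreover have "- ea/Bmin > 0" using ea assms(2) by (simp add: divide_simps)
  moreover have "ea/2*r\<^sup>2 + r * ev \<ge> 0" using ea assms(3,4) by simp
  moreover have "ea/2*r\<^sup>2 \<ge> 0" using ea by simp
  ultimately have "(- ea/Bmin + 1)*(ea/2*r\<^sup>2 + r * ev) \<ge> r * ev"
    by (smt (verit) mult_nonneg_nonneg)
  then show ?thesis using a assms(2,3,4) unfolding Qb_def by simp
qed

lemma gap_step:
  fixes Bmax Bmin L r ex ev ea ox ov oa d :: real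
  assumes "Bmax \<le> Bmin" "Bmin < 0" "Bmax \<le> oa" "0 \<le> d" "d \<le> r"
    "\<forall>\<tau>\<in>{0..d}. 0 \<le> ev + ea*\<tau> \<and> 0 \<le> ov + oa*\<tau>"
    "ex + L \<le> ox" "Qb Bmin Bmax L r ex ev ea ox ov"
  shows "ex + ev*d + ea*d\<^sup>2/2 + L \<le> ox + ov*d + oa*d\<^sup>2/2"
proof -
  have hlp: "ex + ev*\<tau> + ea*\<tau>\<^sup>2/2 + L < ox + ov*\<tau> + oa*\<tau>\<^sup>2/2"
    if "0 \<le> \<tau>" "\<tau> \<le> d" "ov + oa*\<tau> \<le> ev + ea*\<tau>" for \<tau>
  proof -
    have v: "0 \<le> ev + ea*\<tau>" "0 \<le> ov + oa*\<tau>" using assms(6) that by auto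
    have v0: "0 \<le> ev" "0 \<le> ov" using assms(4,6) by (metis atLeastAtMost_iff add.right_neutral mult_zero_right order_refl)+
    have q: "Qb Bmin Bmax L (r - \<tau>) (ex + ev*\<tau> + ea*\<tau>\<^sup>2/2) (ev + ea*\<tau>) ea (ox + ov*\<tau> + oa*\<tau>\<^sup>2/2) (ov + oa*\<tau>)"
      using Qb_flow[OF assms(1-3) that(1) v0(1) v(1) v0(2) v(2) assms(8)] .
    have "(ex + ev*\<tau> + ea*\<tau>\<^sup>2/2) - (ev + ea*\<tau>)\<^sup>2/(2*Bmin) + L < (ox + ov*\<tau> + oa*\<tau>\<^sup>2/2) - (ov + oa*\<tau>)\<^sup>2/(2*Bmax)"
      using Qb_stop[OF assms(1,2) _ v(1) q] that assms(5) by linarith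
    then show ?thesis using closing[OF assms(1,2) v(2) that(3)] by (simp add: add.assoc)
  qed
  define w0 where "w0 = ov - ev"
  define wd where "wd = (ov + oa*d) - (ev + ea*d)"
  define k where "k = oa - ea"
  have gd: "(ox + ov*d + oa*d\<^sup>2/2) - (ex + ev*d + ea*d\<^sup>2/2) = (ox - ex) + d * (w0 + wd)/2"
    unfolding w0_def wd_def by (simp add: field_simps power2_eq_square)
  show ?thesis
  proof (cases "wd \<le> 0")
    case True
    then show ?thesis using hlp[of d] assms(4) unfolding wd_def by auto
  next
    case wdpos: False
    show ?thesis
    proof (cases "w0 \<ge> 0")
      case True
      then have "d * (w0 + wd)/2 \<ge> 0" using wdpos assms(4) by simp
      then show ?thesis using gd assms(7) by linarith
    next
      case False
      have kd: "k * d = wd - w0" unfolding k_def wd_def w0_def by (simp add: algebra_simps)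
      then have "k * d > 0" using False wdpos by linarith
      then have "k > 0" "d > 0" using assms(4) by (auto simp: zero_less_mult_iff)
      define \<tau> where "\<tau> = - w0 / k"
      have kt: "k * \<tau> = - w0" unfolding \<tau>_def using \<open>k>0\<close> by simp
      have t0: "0 \<le> \<tau>" unfolding \<tau>_def using False \<open>k>0\<close> by (simp add: divide_nonpos_pos)
      have "k * \<tau> < k * d" using kt kd wdpos by linarith
      then have td: "\<tau> < d" using \<open>k>0\<close> by simp
      have "ov + oa*\<tau> - (ev + ea*\<tau>) = w0 + k * \<tau>" unfolding w0_def k_def by (simp add: algebra_simps)
      then have "ov + oa*\<tau> \<le> ev + ea*\<tau>" using kt by simp
      then have h: "ex + ev*\<tau> + ea*\<tau>\<^sup>2/2 + L < ox + ov*\<tau> + oa*\<tau>\<^sup>2/2"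
        using hlp t0 td by simp
      have "(ox + ov*d + oa*d\<^sup>2/2) - (ex + ev*d + ea*d\<^sup>2/2) - ((ox + ov*\<tau> + oa*\<tau>\<^sup>2/2) - (ex + ev*\<tau> + ea*\<tau>\<^sup>2/2))
         = (d - \<tau>) * (w0 + k * (d + \<tau>)/2)"
        unfolding w0_def k_def by (simp add: field_simps power2_eq_square)
      also have "w0 + k * (d + \<tau>)/2 = wd / 2"
        using kt kd by (simp add: field_simps)
      then have "(d - \<tau>) * (w0 + k * (d + \<tau>)/2) = (d - \<tau>) * wd / 2" by simp
      also have "\<dots> \<ge> 0" using td wdpos by simp
      finally show ?thesis using h by linarith
    qed
  qed
qed



lemma ode_unique:
  assumes F: "\<forall>\<tau>\<in>{0..r}. (F has_real_derivative f \<tau>) (at \<tau> within {0..r})"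
    and G: "\<forall>\<tau>\<in>{0..r}. (G has_real_derivative f \<tau>) (at \<tau> within {0..r})"
    and "F 0 = G 0" and x: "x \<in> {0..r}"
  shows "F x = G x"
proof -
  have "\<exists>c. \<forall>y\<in>{0..r}. F y - G y = (c::real)"
    apply (rule has_field_derivative_zero_constant)
     apply simp
    using F G by (metis DERIV_diff diff_self)
  then obtain c where c: "\<forall>y\<in>{0..r}. F y - G y = c" by blast
  have "0 \<in> {0..r}" using x by auto
  then have "F 0 - G 0 = c" "F x - G x = c" using c x by auto
  then show ?thesis using assms(3) by simp
qed

lemma plant_closed:
  assumes "plant p s s'"
  shows "\<exists>d\<ge>0. (\<forall>\<tau>\<in>{0..d}. 0 \<le> ve s + ae s * \<tau> \<and> ve s + ae s * \<tau> \<le> cV p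
              \<and> 0 \<le> vo s + ao s * \<tau> \<and> vo s + ao s * \<tau> \<le> cV p \<and> t s + \<tau> \<le> tc s + cT p)
     \<and> s' = s\<lparr>xe := xe s + ve s * d + ae s * d^2/2, ve := ve s + ae s * d,
               xo := xo s + vo s * d + ao s * d^2/2, vo := vo s + ao s * d, t := t s + d\<rparr>"
proof -
  obtain r X VE XO VO TM where r: "r \<ge> 0" and i: "X 0 = xe s" "VE 0 = ve s" "XO 0 = xo s" "VO 0 = vo s" "TM 0 = t s"
    and D: "\<forall>\<tau>\<in>{0..r}.
           (X has_real_derivative VE \<tau>) (at \<tau> within {0..r}) \<and>
           (VE has_real_derivative ae s) (at \<tau> within {0..r}) \<and>
           (XO has_real_derivative VO \<tau>) (at \<tau> within {0..r}) \<and>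
           (VO has_real_derivative ao s) (at \<tau> within {0..r}) \<and>
           (TM has_real_derivative 1) (at \<tau> within {0..r}) \<and>
           TM \<tau> \<le> tc s + cT p \<and> 0 \<le> VE \<tau> \<and> VE \<tau> \<le> cV p \<and> 0 \<le> VO \<tau> \<and> VO \<tau> \<le> cV p"
    and s': "s' = s\<lparr>xe := X r, ve := VE r, xo := XO r, vo := VO r, t := TM r\<rparr>"
    using assms unfolding plant_def by blast
  have dl: "\<And>c. \<forall>\<tau>\<in>{0..r}. ((\<lambda>x. c * x) has_real_derivative c) (at \<tau> within {0..r})"
    by (auto intro!: derivative_eq_intros)
  have dl': "\<And>a b. \<forall>\<tau>\<in>{0..r}. ((\<lambda>x. a + b * x) has_real_derivative b) (at \<tau> within {0..r})"
    "\<And>a. \<forall>\<tau>\<in>{0..r}. ((\<lambda>x. a + x) has_real_derivative 1) (at \<tau> within {0..r})"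
    by (auto intro!: derivative_eq_intros)
  have VE: "VE x = ve s + ae s * x" if "x \<in> {0..r}" for x
    using ode_unique[where F=VE and f="\<lambda>_. ae s" and r=r and G="\<lambda>x. ve s + ae s * x", OF _ _ _ that] D i
    by (simp add: dl')
  have VO: "VO x = vo s + ao s * x" if "x \<in> {0..r}" for x
    using ode_unique[where F=VO and f="\<lambda>_. ao s" and r=r and G="\<lambda>x. vo s + ao s * x", OF _ _ _ that] D i
    by (simp add: dl')
  have TM: "TM x = t s + x" if "x \<in> {0..r}" for x
    using ode_unique[where F=TM and f="\<lambda>_. 1" and r=r and G="\<lambda>x. t s + x", OF _ _ _ that] D i
    by (simp add: dl')
  have X: "X x = xe s + ve s * x + ae s * x^2/2" if "x \<in> {0..r}" for x
  proof (rule ode_unique[where F=X and f=VE and r=r, OF _ _ _ that])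
    show "\<forall>\<tau>\<in>{0..r}. (X has_real_derivative VE \<tau>) (at \<tau> within {0..r})" using D by blast
    show "\<forall>\<tau>\<in>{0..r}. ((\<lambda>x. xe s + ve s * x + ae s * x^2/2) has_real_derivative VE \<tau>) (at \<tau> within {0..r})"
      using VE by (auto intro!: derivative_eq_intros)
  qed (use i in auto)
  have XO: "XO x = xo s + vo s * x + ao s * x^2/2" if "x \<in> {0..r}" for x
  proof (rule ode_unique[where F=XO and f=VO and r=r, OF _ _ _ that])
    show "\<forall>\<tau>\<in>{0..r}. (XO has_real_derivative VO \<tau>) (at \<tau> within {0..r})" using D by blast
    show "\<forall>\<tau>\<in>{0..r}. ((\<lambda>x. xo s + vo s * x + ao s * x^2/2) has_real_derivative VO \<tau>) (at \<tau> within {0..r})"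
      using VO by (auto intro!: derivative_eq_intros)
  qed (use i in auto)
  show ?thesis
    apply (rule exI[of _ r])
    using r D VE VO TM X XO s' by fastforce
qed


lemma Seq_iff: "Seq a b s s' = (\<exists>m. a s m \<and> b m s')" by (auto simp: Seq_def)
lemma Test_iff: "Test P s s' = (s' = s \<and> P s)" by (simp add: Test_def)
lemma Choice_iff: "Choice a b s s' = (a s s' \<or> b s s')" by (simp add: Choice_def)
lemma IfP_iff: "IfP P a s s' = ((P s \<and> a s s') \<or> (\<not> P s \<and> s' = s))"
  by (auto simp: IfP_def Choice_iff Seq_iff Test_iff)
lemma IfElse_iff: "IfElse P a b s s' = ((P s \<and> a s s') \<or> (\<not> P s \<and> b s s'))"
  by (auto simp: IfElse_def Choice_iff Seq_iff Test_iff)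
lemma Rnd_iff: "Rnd upd s s' = (\<exists>r. s' = upd (\<lambda>_. r) s)" by (simp add: Rnd_def)
lemma Asg_iff: "Asg upd e s s' = (s' = upd (\<lambda>_. e s) s)" by (simp add: Asg_def)

lemmas prog_iffs = Seq_iff Test_iff Choice_iff IfP_iff IfElse_iff Rnd_iff Asg_iff

lemma ctrl_o_cases: "ctrl_o p s s' \<Longrightarrow> xe s' = xe s \<and> ve s' = ve s \<and> ae s' = ae s \<and> xo s' = xo s \<and> vo s' = vo s
   \<and> t s' = t s \<and> tc s' = tc s \<and> cBmax p \<le> ao s' \<and> ao s' \<le> cAmax p"
  by (auto simp: ctrl_o_def prog_iffs)

lemma ctrl_T_cases:
  assumes "ctrl_T p s s'"
  shows "xe s' = xe s \<and> ve s' = ve s \<and> xo s' = xo s \<and> vo s' = vo s \<and> ao s' = ao s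
    \<and> t s' = t s \<and> tc s' = t s \<and>
     ((cBmax p \<le> ae s' \<and> ae s' \<le> cAmax p \<and> (safeBack p s' \<or> safeFront p s'))
    \<or> (cBmax p \<le> ae s' \<and> ae s' \<le> cBmin p \<and> xe s \<le> xo s)
    \<or> (cAmin p \<le> ae s' \<and> ae s' \<le> cAmax p \<and> \<not> xe s \<le> xo s))"
  using assms by (auto simp: ctrl_T_def prog_iffs)

lemma accCor_cases:
  assumes "accCor p s s'"
  shows "xe s' = xe s \<and> ve s' = ve s \<and> xo s' = xo s \<and> vo s' = vo s
    \<and> t s' = t s \<and> tc s' = tc s \<and> (ao s' = ao s \<or> ao s' = 0)
     \<and> (ae s' = ae s \<or> (ae s' = 0 \<and> ((ve s = 0 \<and> ae s < 0) \<or> (ve s = cV p \<and> ae s > 0))))"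
  using assms by (auto simp: accCor_def prog_iffs)

lemma plant_cases:
  assumes "plant p s s'"
  shows "\<exists>d\<ge>0. (\<forall>\<tau>\<in>{0..d}. 0 \<le> ve s + ae s * \<tau> \<and> ve s + ae s * \<tau> \<le> cV p
              \<and> 0 \<le> vo s + ao s * \<tau> \<and> vo s + ao s * \<tau> \<le> cV p \<and> t s + \<tau> \<le> tc s + cT p)
     \<and> xe s' = xe s + ve s * d + ae s * d^2/2 \<and> ve s' = ve s + ae s * d
     \<and> xo s' = xo s + vo s * d + ao s * d^2/2 \<and> vo s' = vo s + ao s * d \<and> t s' = t s + d
     \<and> ae s' = ae s \<and> ao s' = ao s \<and> tc s' = tc s"
  using plant_closed[OF assms] by auto

definition InvB :: "prm \<Rightarrow> st \<Rightarrow> bool" where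
  "InvB p s = (Ctx p s \<and> xe s + cL p \<le> xo s \<and> t s \<le> tc s + cT p \<and>
     Qb (cBmin p) (cBmax p) (cL p) (tc s + cT p - t s) (xe s) (ve s) (ae s) (xo s) (vo s))"

abbreviation body :: "prm \<Rightarrow> prog" where
  "body p \<equiv> Seq (ctrl_o p)
     (Seq (Choice (ctrl_T p) (Test (\<lambda>s. t s < tc s + cT p)))
     (Seq (accCor p) (plant p)))"

lemma stepB:
  assumes I: "InvB p s" and st: "body p s s'"
  shows "InvB p s'"
proof -
  obtain s1 s2 s3 where h1: "ctrl_o p s s1" and h2: "Choice (ctrl_T p) (Test (\<lambda>s. t s < tc s + cT p)) s1 s2"
    and h3: "accCor p s2 s3" and h4: "plant p s3 s'"
    using st by (auto simp: Seq_iff)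
  have I1: "InvB p s1" using I ctrl_o_cases[OF h1] by (simp add: InvB_def Ctx_def)
  have I2: "InvB p s2"
    using h2 unfolding Choice_iff Test_iff
  proof (elim disjE conjE)
    assume "s2 = s1" then show ?thesis using I1 by simp
  next
    assume c: "ctrl_T p s1 s2"
    note C = ctrl_T_cases[OF c]
    have ctx: "Ctx p s1" "xe s1 + cL p \<le> xo s1" "t s1 \<le> tc s1 + cT p"
      and q: "Qb (cBmin p) (cBmax p) (cL p) (tc s1 + cT p - t s1) (xe s1) (ve s1) (ae s1) (xo s1) (vo s1)"
      using I1 by (auto simp: InvB_def)
    have stop: "xe s1 - (ve s1)\<^sup>2/(2*cBmin p) + cL p < xo s1 - (vo s1)\<^sup>2/(2*cBmax p)"
      using Qb_stop[OF _ _ _ _ q] ctx by (auto simp: Ctx_def)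
    have ctx2: "Ctx p s2" using C ctx by (auto simp: Ctx_def)
    have base: "xe s2 + cL p \<le> xo s2" "t s2 \<le> tc s2 + cT p" "tc s2 + cT p - t s2 = cT p"
      using C ctx by (auto simp: Ctx_def)
    from C consider (sb) "safeBack p s2" | (sf) "safeFront p s2"
      | (br) "ae s2 \<le> cBmin p" | (ac) "\<not> xe s1 \<le> xo s1" by blast
    then show ?thesis
    proof cases
      case sb
      then have "Qb (cBmin p) (cBmax p) (cL p) (cT p) (xe s2) (ve s2) (ae s2) (xo s2) (vo s2)"
        unfolding safeBack_def Qb_def De_def Do_def by simp
      then show ?thesis using ctx2 base by (simp add: InvB_def)
    next
      case sf
      then have False using base ctx2 unfolding safeFront_def Ctx_def by auto
      then show ?thesis ..
    next
      case br
      then have "Qb (cBmin p) (cBmax p) (cL p) (cT p) (xe s2) (ve s2) (ae s2) (xo s2) (vo s2)"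
        using stop C unfolding Qb_def by simp
      then show ?thesis using ctx2 base by (simp add: InvB_def)
    next
      case ac
      then have False using ctx ctx2 unfolding Ctx_def by auto
      then show ?thesis ..
    qed
  qed
  have I3: "InvB p s3"
  proof -
    note C = accCor_cases[OF h3]
    have ctx: "Ctx p s2" and q: "Qb (cBmin p) (cBmax p) (cL p) (tc s2 + cT p - t s2) (xe s2) (ve s2) (ae s2) (xo s2) (vo s2)"
      and r: "t s2 \<le> tc s2 + cT p" "xe s2 + cL p \<le> xo s2"
      using I2 by (auto simp: InvB_def)
    have ctx3: "Ctx p s3" using C ctx by (auto simp: Ctx_def)
    have "Qb (cBmin p) (cBmax p) (cL p) (tc s2 + cT p - t s2) (xe s2) (ve s2) (ae s3) (xo s2) (vo s2)"
    proof (cases "ae s3 = ae s2")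
      case True then show ?thesis using q by simp
    next
      case False
      then have "ae s3 = 0" "(ve s2 = 0 \<and> ae s2 < 0) \<or> ae s2 > 0" using C by auto
      then show ?thesis using Qb_acc[OF _ _ _ _ q] ctx r by (auto simp: Ctx_def)
    qed
    then show ?thesis using C ctx3 r by (simp add: InvB_def)
  qed
  obtain d where d: "d \<ge> 0" and dom: "\<forall>\<tau>\<in>{0..d}. 0 \<le> ve s3 + ae s3 * \<tau> \<and> ve s3 + ae s3 * \<tau> \<le> cV p
              \<and> 0 \<le> vo s3 + ao s3 * \<tau> \<and> vo s3 + ao s3 * \<tau> \<le> cV p \<and> t s3 + \<tau> \<le> tc s3 + cT p"
    and f: "xe s' = xe s3 + ve s3 * d + ae s3 * d^2/2" "ve s' = ve s3 + ae s3 * d"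
     "xo s' = xo s3 + vo s3 * d + ao s3 * d^2/2" "vo s' = vo s3 + ao s3 * d" "t s' = t s3 + d"
     "ae s' = ae s3" "ao s' = ao s3" "tc s' = tc s3"
    using plant_cases[OF h4] by blast
  have ctx: "Ctx p s3" and q: "Qb (cBmin p) (cBmax p) (cL p) (tc s3 + cT p - t s3) (xe s3) (ve s3) (ae s3) (xo s3) (vo s3)"
      and r: "t s3 \<le> tc s3 + cT p" "xe s3 + cL p \<le> xo s3"
      using I3 by (auto simp: InvB_def)
  have dd: "0 \<le> ve s3 + ae s3 * d" "ve s3 + ae s3 * d \<le> cV p" "0 \<le> vo s3 + ao s3 * d" "vo s3 + ao s3 * d \<le> cV p"
    "t s3 + d \<le> tc s3 + cT p" using dom d by auto
  have dom': "\<forall>\<tau>\<in>{0..d}. 0 \<le> ve s3 + ae s3 * \<tau> \<and> 0 \<le> vo s3 + ao s3 * \<tau>" using dom by blast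
  have ctxB: "cBmax p \<le> cBmin p" "cBmin p < 0" "cBmax p \<le> ao s3" "0 \<le> ve s3" "0 \<le> vo s3"
    using ctx by (auto simp: Ctx_def)
  have g: "xe s' + cL p \<le> xo s'"
    using gap_step[OF ctxB(1-3) d _ dom' r(2) q] dd f by simp
  have q': "Qb (cBmin p) (cBmax p) (cL p) (tc s3 + cT p - t s3 - d) (xe s') (ve s') (ae s') (xo s') (vo s')"
    using Qb_flow[OF ctxB(1-3) d ctxB(4) dd(1) ctxB(5) dd(3) q] f by simp
  show ?thesis unfolding InvB_def using g q' f dd ctx by (auto simp: Ctx_def algebra_simps)
qed

definition InvF :: "prm \<Rightarrow> st \<Rightarrow> bool" where
  "InvF p s = (Ctx p s \<and> xo s + cL p \<le> xe s \<and> t s \<le> tc s + cT p \<and>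
     Qb (- cAmin p) (- cAmax p) (cL p) (tc s + cT p - t s) (cV p * t s - xe s) (cV p - ve s) (- ae s)
        (cV p * t s - xo s) (cV p - vo s))"

lemma hDe_mirror: "hDe p a s = - ((cV p * t s - xe s) - (cV p - ve s)\<^sup>2/(2 * (- a)))"
  unfolding hDe_def hxe_def hve_def by (simp add: power2_commute)

lemma hDo_mirror: "hDo p s = - ((cV p * t s - xo s) - (cV p - vo s)\<^sup>2/(2 * (- cAmax p)))"
  unfolding hDo_def hxo_def hvo_def by (simp add: power2_commute)

lemma safeFront_Qb:
  assumes "safeFront p s" "cAmin p > 0"
  shows "Qb (- cAmin p) (- cAmax p) (cL p) (cT p) (cV p * t s - xe s) (cV p - ve s) (- ae s)
        (cV p * t s - xo s) (cV p - vo s)"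
proof -
  let ?De = "\<lambda>a. (cV p * t s - xe s) - (cV p - ve s)\<^sup>2/(2 * a)"
  let ?Do = "(cV p * t s - xo s) - (cV p - vo s)\<^sup>2/(2 * (- cAmax p))"
  have e1: "hve p s + ae s * cT p = - ((cV p - ve s) + (- ae s) * cT p)" unfolding hve_def by simp
  have e2: "(- ae s / cAmin p + 1) * (ae s / 2 * (cT p)\<^sup>2 + hve p s * cT p)
     = - ((- (- ae s) / (- cAmin p) + 1) * ((- ae s) / 2 * (cT p)\<^sup>2 + cT p * (cV p - ve s)))"
    unfolding hve_def by (simp add: algebra_simps)
  from assms(1) have "(cAmin p \<le> ae s \<and> hDo p s + cL p < hDe p (cAmin p) s) \<or>
      (ae s \<le> cAmin p \<and> hve p s + ae s * cT p > 0 \<and> hDo p s + cL p < hDe p (ae s) s) \<or>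
      (ae s \<le> cAmin p \<and> hve p s + ae s * cT p \<le> 0 \<and>
        hDo p s + cL p < hDe p (cAmin p) s
          + (- ae s / cAmin p + 1) * (ae s / 2 * (cT p)\<^sup>2 + hve p s * cT p))"
    unfolding safeFront_def by blast
  then show ?thesis
    unfolding Qb_def hDe_mirror hDo_mirror e1 e2 by (elim disjE) auto
qed

lemma stepF:
  assumes I: "InvF p s" and st: "body p s s'"
  shows "InvF p s'"
proof -
  obtain s1 s2 s3 where h1: "ctrl_o p s s1" and h2: "Choice (ctrl_T p) (Test (\<lambda>s. t s < tc s + cT p)) s1 s2"
    and h3: "accCor p s2 s3" and h4: "plant p s3 s'"
    using st by (auto simp: Seq_iff)
  have I1: "InvF p s1" using I ctrl_o_cases[OF h1] by (simp add: InvF_def Ctx_def)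
  have I2: "InvF p s2"
    using h2 unfolding Choice_iff Test_iff
  proof (elim disjE conjE)
    assume "s2 = s1" then show ?thesis using I1 by simp
  next
    assume c: "ctrl_T p s1 s2"
    note C = ctrl_T_cases[OF c]
    have ctx: "Ctx p s1" "xo s1 + cL p \<le> xe s1" "t s1 \<le> tc s1 + cT p"
      and q: "Qb (- cAmin p) (- cAmax p) (cL p) (tc s1 + cT p - t s1) (cV p * t s1 - xe s1) (cV p - ve s1) (- ae s1)
        (cV p * t s1 - xo s1) (cV p - vo s1)"
      using I1 by (auto simp: InvF_def)
    have stop: "(cV p * t s1 - xe s1) - (cV p - ve s1)\<^sup>2/(2 * (- cAmin p)) + cL p
       < (cV p * t s1 - xo s1) - (cV p - vo s1)\<^sup>2/(2 * (- cAmax p))"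
      using Qb_stop[OF _ _ _ _ q] ctx by (auto simp: Ctx_def)
    have ctx2: "Ctx p s2" using C ctx by (auto simp: Ctx_def)
    have base: "xo s2 + cL p \<le> xe s2" "t s2 \<le> tc s2 + cT p" "tc s2 + cT p - t s2 = cT p"
      using C ctx by (auto simp: Ctx_def)
    from C consider (sb) "safeBack p s2" | (sf) "safeFront p s2"
      | (br) "xe s1 \<le> xo s1" | (ac) "cAmin p \<le> ae s2" by blast
    then show ?thesis
    proof cases
      case sf
      then have "Qb (- cAmin p) (- cAmax p) (cL p) (cT p) (cV p * t s2 - xe s2) (cV p - ve s2) (- ae s2)
        (cV p * t s2 - xo s2) (cV p - vo s2)"
        using safeFront_Qb ctx2 by (auto simp: Ctx_def)
      then show ?thesis using ctx2 base by (simp add: InvF_def)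
    next
      case sb
      then have False using base ctx2 unfolding safeBack_def Ctx_def by auto
      then show ?thesis ..
    next
      case ac
      then have "Qb (- cAmin p) (- cAmax p) (cL p) (cT p) (cV p * t s2 - xe s2) (cV p - ve s2) (- ae s2)
        (cV p * t s2 - xo s2) (cV p - vo s2)"
        using stop C unfolding Qb_def by simp
      then show ?thesis using ctx2 base by (simp add: InvF_def)
    next
      case br
      then have False using ctx ctx2 unfolding Ctx_def by auto
      then show ?thesis ..
    qed
  qed
  have I3: "InvF p s3"
  proof -
    note C = accCor_cases[OF h3]
    have ctx: "Ctx p s2" and q: "Qb (- cAmin p) (- cAmax p) (cL p) (tc s2 + cT p - t s2) (cV p * t s2 - xe s2) (cV p - ve s2) (- ae s2)
        (cV p * t s2 - xo s2) (cV p - vo s2)"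
      and r: "t s2 \<le> tc s2 + cT p" "xo s2 + cL p \<le> xe s2"
      using I2 by (auto simp: InvF_def)
    have ctx3: "Ctx p s3" using C ctx by (auto simp: Ctx_def)
    have "Qb (- cAmin p) (- cAmax p) (cL p) (tc s2 + cT p - t s2) (cV p * t s2 - xe s2) (cV p - ve s2) (- ae s3)
        (cV p * t s2 - xo s2) (cV p - vo s2)"
    proof (cases "ae s3 = ae s2")
      case True then show ?thesis using q by simp
    next
      case False
      then have "ae s3 = 0" "(cV p - ve s2 = 0 \<and> - ae s2 < 0) \<or> - ae s2 > 0" using C by auto
      then show ?thesis using Qb_acc[OF _ _ _ _ q] ctx r by (auto simp: Ctx_def)
    qed
    then show ?thesis using C ctx3 r by (simp add: InvF_def)
  qed
  obtain d where d: "d \<ge> 0" and dom: "\<forall>\<tau>\<in>{0..d}. 0 \<le> ve s3 + ae s3 * \<tau> \<and> ve s3 + ae s3 * \<tau> \<le> cV p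
              \<and> 0 \<le> vo s3 + ao s3 * \<tau> \<and> vo s3 + ao s3 * \<tau> \<le> cV p \<and> t s3 + \<tau> \<le> tc s3 + cT p"
    and f: "xe s' = xe s3 + ve s3 * d + ae s3 * d^2/2" "ve s' = ve s3 + ae s3 * d"
     "xo s' = xo s3 + vo s3 * d + ao s3 * d^2/2" "vo s' = vo s3 + ao s3 * d" "t s' = t s3 + d"
     "ae s' = ae s3" "ao s' = ao s3" "tc s' = tc s3"
    using plant_cases[OF h4] by blast
  have ctx: "Ctx p s3" and q: "Qb (- cAmin p) (- cAmax p) (cL p) (tc s3 + cT p - t s3) (cV p * t s3 - xe s3) (cV p - ve s3) (- ae s3)
        (cV p * t s3 - xo s3) (cV p - vo s3)"
      and r: "t s3 \<le> tc s3 + cT p" "xo s3 + cL p \<le> xe s3"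
      using I3 by (auto simp: InvF_def)
  have dd: "0 \<le> ve s3 + ae s3 * d" "ve s3 + ae s3 * d \<le> cV p" "0 \<le> vo s3 + ao s3 * d" "vo s3 + ao s3 * d \<le> cV p"
    "t s3 + d \<le> tc s3 + cT p" using dom d by auto
  have dom': "\<forall>\<tau>\<in>{0..d}. 0 \<le> (cV p - ve s3) + (- ae s3) * \<tau> \<and> 0 \<le> (cV p - vo s3) + (- ao s3) * \<tau>"
    using dom by auto
  have ctxB: "- cAmax p \<le> - cAmin p" "- cAmin p < 0" "- cAmax p \<le> - ao s3" "0 \<le> cV p - ve s3" "0 \<le> cV p - vo s3"
    "0 \<le> (cV p - ve s3) + (- ae s3) * d" "0 \<le> (cV p - vo s3) + (- ao s3) * d"
    using ctx dd by (auto simp: Ctx_def)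
  have m: "cV p * t s' - xe s' = (cV p * t s3 - xe s3) + (cV p - ve s3) * d + (- ae s3) * d^2/2"
    "cV p * t s' - xo s' = (cV p * t s3 - xo s3) + (cV p - vo s3) * d + (- ao s3) * d^2/2"
    "cV p - ve s' = (cV p - ve s3) + (- ae s3) * d" "cV p - vo s' = (cV p - vo s3) + (- ao s3) * d"
    using f by (auto simp: algebra_simps)
  have g: "(cV p * t s' - xe s') + cL p \<le> (cV p * t s' - xo s')"
    unfolding m using gap_step[OF ctxB(1-3) d _ dom' _ q] dd r by simp
  have q': "Qb (- cAmin p) (- cAmax p) (cL p) (tc s3 + cT p - t s3 - d) (cV p * t s' - xe s') (cV p - ve s') (- ae s')
        (cV p * t s' - xo s') (cV p - vo s')"
    unfolding m f(6) using Qb_flow[OF ctxB(1-3) d ctxB(4) ctxB(6) ctxB(5) ctxB(7) q] .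
  show ?thesis unfolding InvF_def using g q' f dd ctx by (auto simp: Ctx_def algebra_simps)
qed

lemma star_inv:
  assumes "Inv s" "\<And>s s'. Inv s \<Longrightarrow> body p s s' \<Longrightarrow> Inv s'" "(body p)\<^sup>*\<^sup>* s s'"
  shows "Inv s'"
  using assms(3,1) by (induction rule: rtranclp_induct) (auto intro: assms(2))

theorem theorem1:
  shows "(\<forall>p s. Ctx p s \<and> xe s + cL p \<le> xo s \<and> De (cBmin p) s + cL p < Do p s
                \<and> tc s = t s - cT p
           \<longrightarrow> Box (model p) (\<lambda>s'. xe s' + cL p \<le> xo s') s)
       \<and> (\<forall>p s. Ctx p s \<and> xo s + cL p \<le> xe s \<and> hDo p s + cL p < hDe p (cAmin p) s
                \<and> tc s = t s - cT p
           \<longrightarrow> Box (model p) (\<lambda>s'. xo s' + cL p \<le> xe s') s)"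
proof (intro conjI allI impI)
  fix p s
  assume a: "Ctx p s \<and> xe s + cL p \<le> xo s \<and> De (cBmin p) s + cL p < Do p s \<and> tc s = t s - cT p"
  have r0: "tc s + cT p - t s = 0" using a by simp
  have "Qb (cBmin p) (cBmax p) (cL p) 0 (xe s) (ve s) (ae s) (xo s) (vo s)"
  proof (cases "ae s \<le> cBmin p")
    case True then show ?thesis using a unfolding Qb_def De_def Do_def by simp
  next
    case False then show ?thesis using a unfolding Qb_def De_def Do_def Ctx_def by simp
  qed
  then have "InvB p s"
    using a r0 unfolding InvB_def by simp
  note i0 = this
  show "Box (model p) (\<lambda>s'. xe s' + cL p \<le> xo s') s"
    unfolding Box_def
  proof (intro allI impI)
    fix s' assume "model p s s'"
    then have "(body p)\<^sup>*\<^sup>* s s'" by (simp add: model_def Star_def)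
    then have "InvB p s'" using i0 by (induction rule: rtranclp_induct) (auto intro: stepB)
    then show "xe s' + cL p \<le> xo s'" by (simp add: InvB_def)
  qed
next
  fix p s
  assume a: "Ctx p s \<and> xo s + cL p \<le> xe s \<and> hDo p s + cL p < hDe p (cAmin p) s \<and> tc s = t s - cT p"
  have r0: "tc s + cT p - t s = 0" using a by simp
  have h: "(cV p * t s - xe s) - (cV p - ve s)\<^sup>2/(2 * (- cAmin p)) + cL p < (cV p * t s - xo s) - (cV p - vo s)\<^sup>2/(2 * (- cAmax p))"
    using a unfolding hDe_mirror hDo_mirror by linarith
  have "Qb (- cAmin p) (- cAmax p) (cL p) 0 (cV p * t s - xe s) (cV p - ve s) (- ae s) (cV p * t s - xo s) (cV p - vo s)"
  proof (cases "- ae s \<le> - cAmin p")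
    case True then show ?thesis using h unfolding Qb_def by simp
  next
    case False then show ?thesis using a h unfolding Qb_def Ctx_def by simp
  qed
  then have "InvF p s"
    using a r0 unfolding InvF_def by simp
  note i0 = this
  show "Box (model p) (\<lambda>s'. xo s' + cL p \<le> xe s') s"
    unfolding Box_def
  proof (intro allI impI)
    fix s' assume "model p s s'"
    then have "(body p)\<^sup>*\<^sup>* s s'" by (simp add: model_def Star_def)
    then have "InvF p s'" using i0 by (induction rule: rtranclp_induct) (auto intro: stepF)
    then show "xo s' + cL p \<le> xe s'" by (simp add: InvF_def)
  qed
qed

end
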